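(* Let $G=(V,E)$ be a $2$-edge-strongly biconnected directed graph with $n=|V|$, and let $U\subseteq E$ be an optimal solution of the minimum $2$-edge-strongly biconnected spanning subgraph problem on $G$, i.e. $U$ is a minimum-size subset of $E$ such that $(V,U)$ is $2$-edge-strongly biconnected. Then $(V,U)$ has at least $2n$ edges.
   Context: A directed graph is strongly biconnected if it is strongly connected and its underlying undirected graph (ignoring edge directions) is biconnected. A strongly biconnected directed graph $G=(V,E)$ is $2$-edge-strongly biconnected if it has at least three vertices and $(V,E\setminus\{e\})$ is strongly biconnected for every $e\in E$. *)

theory Defs
  imports Main
begin

definition digraph :: "'a set \<Rightarrow> ('a \<times> 'a) set \<Rightarrow> bool" where
  "digraph V E \<longleftrightarrow> finite V \<and> E \<subseteq> V \<times> V"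

definition strongly_connected :: "'a set \<Rightarrow> ('a \<times> 'a) set \<Rightarrow> bool" where
  "strongly_connected V E \<longleftrightarrow> (\<forall>u\<in>V. \<forall>v\<in>V. (u, v) \<in> E\<^sup>*)"

definition und_restr :: "('a \<times> 'a) set \<Rightarrow> 'a set \<Rightarrow> ('a \<times> 'a) set" where
  "und_restr E W = {(x, y). ((x, y) \<in> E \<or> (y, x) \<in> E) \<and> x \<in> W \<and> y \<in> W}"

definition und_connected :: "'a set \<Rightarrow> ('a \<times> 'a) set \<Rightarrow> bool" where
  "und_connected W E \<longleftrightarrow> (\<forall>u\<in>W. \<forall>v\<in>W. (u, v) \<in> (und_restr E W)\<^sup>*)"

definition und_biconnected :: "'a set \<Rightarrow> ('a \<times> 'a) set \<Rightarrow> bool" where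
  "und_biconnected V E \<longleftrightarrow> und_connected V E \<and> (\<forall>v\<in>V. und_connected (V - {v}) E)"

definition strongly_biconnected :: "'a set \<Rightarrow> ('a \<times> 'a) set \<Rightarrow> bool" where
  "strongly_biconnected V E \<longleftrightarrow> strongly_connected V E \<and> und_biconnected V E"

definition two_edge_strongly_biconnected :: "'a set \<Rightarrow> ('a \<times> 'a) set \<Rightarrow> bool" where
  "two_edge_strongly_biconnected V E \<longleftrightarrow>
     strongly_biconnected V E \<and> card V \<ge> 3 \<and>
     (\<forall>e\<in>E. strongly_biconnected V (E - {e}))"

end

theory Submission
  imports Defs
begin

lemma out_nb_aux:
  assumes "(x, u) \<in> F\<^sup>*" "u \<noteq> v"
  shows "x = v \<longrightarrow> (\<exists>w. (v, w) \<in> F \<and> w \<noteq> v)"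
  using assms(1)
proof (induction rule: converse_rtrancl_induct)
  case base
  then show ?case using assms(2) by blast
next
  case (step y z)
  then show ?case by blast
qed

lemma out_nb:
  assumes "strongly_connected V F" "v \<in> V" "u \<in> V" "u \<noteq> v"
  shows "\<exists>w. (v, w) \<in> F \<and> w \<noteq> v"
  using assms out_nb_aux[of v u F v] unfolding strongly_connected_def by blast

theorem mainTheorem3:
  fixes V :: "'a set" and E U :: "('a \<times> 'a) set"
  assumes "digraph V E"
    and "two_edge_strongly_biconnected V E"
    and "U \<subseteq> E"
    and "two_edge_strongly_biconnected V U"
    and "\<forall>U'. U' \<subseteq> E \<and> two_edge_strongly_biconnected V U' \<longrightarrow> card U \<le> card U'"
  shows "card U \<ge> 2 * card V"
proof -
  have fin: "finite V" and UV: "U \<subseteq> V \<times> V" using assms(1,3) unfolding digraph_def by auto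
  have finU: "finite U" using fin UV finite_subset by blast
  have sc: "strongly_connected V U" and c3: "card V \<ge> 3"
    and sc2: "\<And>e. e \<in> U \<Longrightarrow> strongly_connected V (U - {e})"
    using assms(4) unfolding two_edge_strongly_biconnected_def strongly_biconnected_def by auto
  define N where "N v = {w. (v, w) \<in> U \<and> w \<noteq> v}" for v
  have other: "\<exists>u\<in>V. u \<noteq> v" for v
  proof (rule ccontr)
    assume "\<not> ?thesis"
    then have "V \<subseteq> {v}" by blast
    then have "card V \<le> 1" using card_mono[of "{v}" V] by simp
    then show False using c3 by simp
  qed
  have N2: "card (N v) \<ge> 2" if "v \<in> V" for v
  proof -
    obtain u where u: "u \<in> V" "u \<noteq> v" using other by blast
    obtain w1 where w1: "(v, w1) \<in> U" "w1 \<noteq> v" using out_nb[OF sc \<open>v \<in> V\<close> u] by blast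
    obtain w2 where w2: "(v, w2) \<in> U - {(v, w1)}" "w2 \<noteq> v"
      using out_nb[OF sc2[OF w1(1)] \<open>v \<in> V\<close> u] by blast
    have "{w1, w2} \<subseteq> N v" using w1 w2 unfolding N_def by auto
    moreover have "finite (N v)" using fin unfolding N_def
      by (rule finite_subset[rotated]) (use UV in auto)
    ultimately have "card {w1, w2} \<le> card (N v)" by (rule card_mono[rotated])
    moreover have "card {w1, w2} = 2" using w2 by auto
    ultimately show ?thesis by simp
  qed
  have finN: "finite (N v)" if "v \<in> V" for v
    using fin unfolding N_def by (rule finite_subset[rotated]) (use UV in auto)
  have sub: "Sigma V N \<subseteq> U" unfolding N_def by auto
  have "card (Sigma V N) = (\<Sum>v\<in>V. card (N v))" using fin finN by (simp add: card_SigmaI)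
  also have "\<dots> \<ge> (\<Sum>v\<in>V. 2)" using N2 by (intro sum_mono) auto
  finally have "card (Sigma V N) \<ge> 2 * card V" by simp
  moreover have "card (Sigma V N) \<le> card U" using sub finU by (rule card_mono[rotated])
  ultimately show ?thesis by simp
qed

end
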